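(* Let $\mathbb{F}\in\{\mathbb{R},\mathbb{C}\}$, $1\le d\le N-1$, let $F=(f_n)_{n=1}^N$ be an equal norm tight frame in $\mathbb{F}^d$ with $\|f_n\|^2=d$ for all $n$, and let $G=(g_n)_{n=1}^N$ be a Naimark complement of $F$. Then $\Psi_{N,d}(\lambda_F)=\lambda_{\widetilde G}$.
   Context: A frame $F=(f_n)_{n=1}^N$ in $\mathbb{F}^d$ is a spanning family, identified with the $d\times N$ matrix with columns $f_n$; it is tight if $FF^*$ is a multiple of the identity, equal norm if all $\|f_n\|$ coincide (here $\|f_n\|^2=d$, forcing $FF^*=N I_d$). A Naimark complement of such $F$ is a frame $G=(g_n)_{n=1}^N$ in $\mathbb{F}^{N-d}$ (an $(N-d)\times N$ matrix) with $F^*F+G^*G=N\cdot I_N$. For a frame $H$ of $N$ vectors in $\mathbb{F}^k$, $H_n$ is the matrix of its first $n$ columns and $\lambda_H\in\mathbb{R}^{k\times(N+1)}$ has as column $n$ ($0\le n\le N$) the eigenvalues of $H_nH_n^*$ in non-increasing order. $\widetilde G=(g_{N-n+1})_{n=1}^N$ is $G$ with reversed order. $\Psi_{N,d}$ sends $\lambda\in\mathbb{R}^{d\times(N+1)}$ to the $(N-d)\times(N+1)$ matrix with $(\Psi_{N,d}(\lambda))_{i,n}=\lambda_{d+i-n,N-n}$ if $i\le n\le d+i-1$, $=0$ if $n<i$, $=N$ if $n>d+i-1$ ($1\le i\le N-d$, $0\le n\le N$). *)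

theory Defs
  imports "Jordan_Normal_Form.Char_Poly" "Jordan_Normal_Form.Conjugate"
begin

text \<open>Frames are matrices (columns = frame vectors), over 'a = real or complex.
  All indices are 0-based: paper column n (1-based) is Isabelle column n-1,
  paper eigenvalue row i (1-based) is Isabelle row i-1.\<close>

definition adj :: "'a :: conjugatable_field mat \<Rightarrow> 'a mat" where
  "adj A = transpose_mat (map_mat conjugate A)"

definition spanning :: "'a :: conjugatable_field mat \<Rightarrow> bool" where
  "spanning H \<longleftrightarrow> (\<forall>v \<in> carrier_vec (dim_row H). \<exists>c \<in> carrier_vec (dim_col H). v = H *\<^sub>v c)"

definition tight :: "'a :: conjugatable_field mat \<Rightarrow> bool" where
  "tight H \<longleftrightarrow> (\<exists>c. H * adj H = c \<cdot>\<^sub>m 1\<^sub>m (dim_row H))"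

definition colnorm2 :: "'a :: conjugatable_field mat \<Rightarrow> nat \<Rightarrow> 'a" where
  "colnorm2 H j = (\<Sum>i<dim_row H. H $$ (i, j) * conjugate (H $$ (i, j)))"

definition first_cols :: "'a mat \<Rightarrow> nat \<Rightarrow> 'a mat" where
  "first_cols H n = mat (dim_row H) n (\<lambda>(i, j). H $$ (i, j))"

definition rev_cols :: "'a mat \<Rightarrow> 'a mat" where
  "rev_cols H = mat (dim_row H) (dim_col H) (\<lambda>(i, j). H $$ (i, dim_col H - 1 - j))"

definition eigenvalues_desc :: "'a :: {comm_ring_1, real_algebra_1} mat \<Rightarrow> real list" where
  "eigenvalues_desc A = (THE xs. length xs = dim_row A \<and> sorted_wrt (\<ge>) xs \<and>
      char_poly A = prod_list (map (\<lambda>a. [: - of_real a, 1 :]) xs))"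

definition lambda_mat :: "'a :: {conjugatable_field, real_algebra_1} mat \<Rightarrow> nat \<Rightarrow> nat \<Rightarrow> real" where
  "lambda_mat H i n = eigenvalues_desc (first_cols H n * adj (first_cols H n)) ! i"

text \<open>Psi_{N,d}, with 0-based row index r (paper i = r+1).\<close>
definition Psi :: "nat \<Rightarrow> nat \<Rightarrow> (nat \<Rightarrow> nat \<Rightarrow> real) \<Rightarrow> nat \<Rightarrow> nat \<Rightarrow> real" where
  "Psi N d lam r n = (if n < r + 1 then 0 else if n > d + r then real N else lam (d + r - n) (N - n))"

end

theory Submission
  imports Defs
begin

lemma char_poly_eval:
  fixes A :: "'a::field mat"
  assumes A: "A \<in> carrier_mat n n"
  shows "poly (char_poly A) x = det (x \<cdot>\<^sub>m 1\<^sub>m n - A)"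
proof -
  have "- char_matrix A x = x \<cdot>\<^sub>m 1\<^sub>m n - A"
    using A unfolding char_matrix_def by (intro eq_matI) auto
  then show ?thesis using char_poly_matrix[OF A] by simp
qed


lemma det_sylvester:
  fixes A :: "'a::field mat"
  assumes A: "A \<in> carrier_mat k n" and B: "B \<in> carrier_mat n k"
  shows "x ^ n * det (x \<cdot>\<^sub>m 1\<^sub>m k - A * B) = x ^ k * det (x \<cdot>\<^sub>m 1\<^sub>m n - B * A)"
proof -
  define M where "M = four_block_mat (x \<cdot>\<^sub>m 1\<^sub>m k) A B (1\<^sub>m n)"
  define L where "L = four_block_mat (1\<^sub>m k) (-A) (0\<^sub>m n k) (x \<cdot>\<^sub>m 1\<^sub>m n)"
  define R where "R = four_block_mat (1\<^sub>m k) (-A) (0\<^sub>m n k) (x \<cdot>\<^sub>m 1\<^sub>m n)"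
  have M: "M \<in> carrier_mat (k+n) (k+n)" and L: "L \<in> carrier_mat (k+n) (k+n)" 
    using A B by (auto simp: M_def L_def)
  have AB: "A * B \<in> carrier_mat k k" and BA: "B * A \<in> carrier_mat n n" using A B by auto
  have b1: "1\<^sub>m k * (x \<cdot>\<^sub>m 1\<^sub>m k) + - A * B = x \<cdot>\<^sub>m 1\<^sub>m k - A * B"
    using A B by (intro eq_matI) auto
  have b2: "1\<^sub>m k * A + - A * 1\<^sub>m n = 0\<^sub>m k n"
    using A B by (intro eq_matI) auto
  have b3: "0\<^sub>m n k * (x \<cdot>\<^sub>m 1\<^sub>m k) + x \<cdot>\<^sub>m 1\<^sub>m n * B = x \<cdot>\<^sub>m B"
    using A B by (intro eq_matI) auto
  have b4: "0\<^sub>m n k * A + x \<cdot>\<^sub>m 1\<^sub>m n * 1\<^sub>m n = x \<cdot>\<^sub>m 1\<^sub>m n"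
    using A B by (intro eq_matI) auto
  have LM: "L * M = four_block_mat (x \<cdot>\<^sub>m 1\<^sub>m k - A * B) (0\<^sub>m k n) (x \<cdot>\<^sub>m B) (x \<cdot>\<^sub>m 1\<^sub>m n)"
    unfolding L_def M_def using A B
    by (subst mult_four_block_mat[of _ k k _ n _ n _ _ k _ n]) (auto simp: b1 b2 b3 b4)
  have c1: "x \<cdot>\<^sub>m 1\<^sub>m k * 1\<^sub>m k + A * 0\<^sub>m n k = x \<cdot>\<^sub>m 1\<^sub>m k"
    using A B by (intro eq_matI) auto
  have c2: "- (x \<cdot>\<^sub>m 1\<^sub>m k * A) + A * (x \<cdot>\<^sub>m 1\<^sub>m n) = 0\<^sub>m k n"
    using A B by (intro eq_matI) auto
  have c3: "B * 1\<^sub>m k + 1\<^sub>m n * 0\<^sub>m n k = B"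
    using A B by (intro eq_matI) auto
  have c4: "- (B * A) + x \<cdot>\<^sub>m 1\<^sub>m n = x \<cdot>\<^sub>m 1\<^sub>m n - B * A"
    using A B by (intro eq_matI) auto
  have MR: "M * R = four_block_mat (x \<cdot>\<^sub>m 1\<^sub>m k) (0\<^sub>m k n) B (x \<cdot>\<^sub>m 1\<^sub>m n - B * A)"
    unfolding R_def M_def using A B
    by (subst mult_four_block_mat[of _ k k _ n _ n _ _ k _ n]) (auto simp: c1 c2 c3 c4)
  have dL: "det L = x ^ n" unfolding L_def
    by (subst det_four_block_mat_lower_left_zero[of _ k _ n]) (use A in auto)
  have dR: "det R = x ^ n" unfolding R_def
    by (subst det_four_block_mat_lower_left_zero[of _ k _ n]) (use A in auto)
  have e1: "det (L * M) = det (x \<cdot>\<^sub>m 1\<^sub>m k - A * B) * x ^ n" unfolding LM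
    by (subst det_four_block_mat_upper_right_zero[of _ k _ n]) (use A B in auto)
  have e2: "det (L * M) = x ^ n * det M" using det_mult[OF L M] dL by simp
  have e3: "det (M * R) = x ^ k * det (x \<cdot>\<^sub>m 1\<^sub>m n - B * A)" unfolding MR
    by (subst det_four_block_mat_upper_right_zero[of _ k _ n]) (use A B in auto)
  have RL: "R = L" unfolding R_def L_def ..
  have e4: "det (M * R) = det M * x ^ n" using det_mult[OF M L] dR unfolding RL by simp
  show ?thesis using e1 e2 e3 e4 by (metis mult.commute)
qed



definition lp :: "real list \<Rightarrow> 'a::{comm_ring_1, real_algebra_1} poly" where
  "lp xs = prod_list (map (\<lambda>a. [: - of_real a, 1 :]) xs)"

lemma lp_nonzero: "(lp xs :: 'a::{idom,real_algebra_1} poly) \<noteq> 0"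
proof -
  have "(0::'a poly) \<notin> set (map (\<lambda>a. [: - of_real a, 1 :]) xs)" by auto
  then show ?thesis unfolding lp_def prod_list_zero_iff by blast
qed

lemma lp_Cons: "lp (b # xs) = [: - of_real b, 1 :] * lp xs"
  unfolding lp_def by simp

lemma order_lin: "order (of_real a :: 'a::{idom,real_algebra_1}) [: - of_real b, 1 :] = (if a = b then 1 else 0)"
  using order_power_n_n[of "of_real a :: 'a" 1] by (auto intro!: order_0I)

lemma order_lp: "order (of_real a :: 'a::{idom,real_algebra_1}) (lp xs) = count (mset xs) a"
proof (induction xs)
  case Nil
  then show ?case by (simp add: lp_def order_0I)
next
  case (Cons b xs)
  show ?case
    apply (subst lp_Cons, subst order_mult)
     apply (metis lp_nonzero mult_eq_0_iff pCons_eq_0_iff one_neq_zero)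
    using Cons.IH by (simp add: order_lin)
qed

lemma lp_inj: "(lp xs :: 'a::{idom,real_algebra_1} poly) = lp ys \<Longrightarrow> mset xs = mset ys"
  by (metis multiset_eqI order_lp)

lemma lp_mset: "mset xs = mset ys \<Longrightarrow> lp xs = lp ys"
  unfolding lp_def by (metis mset_map prod_mset_prod_list)

lemma sorted_desc_unique:
  fixes xs ys :: "real list"
  assumes "sorted_wrt (\<ge>) xs" "sorted_wrt (\<ge>) ys" "mset xs = mset ys"
  shows "xs = ys"
proof -
  have "sorted (rev xs)" "sorted (rev ys)" using assms by (simp_all add: sorted_wrt_rev )
  then have "rev xs = rev ys"
    by (metis assms(3) mset_rev properties_for_sort)
  then show ?thesis by simp
qed

lemma poly_lp: "poly (lp xs :: 'a::{comm_ring_1,real_algebra_1} poly) x = (\<Prod>a\<leftarrow>xs. x - of_real a)"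
  unfolding lp_def by (induction xs) (auto simp: left_diff_distrib)

lemma eigenvalues_desc_eq:
  fixes M :: "'a::{idom,real_algebra_1} mat"
  assumes "length xs = dim_row M" "sorted_wrt (\<ge>) xs" "char_poly M = lp xs"
  shows "eigenvalues_desc M = xs"
  unfolding eigenvalues_desc_def
proof (rule the_equality)
  show "length xs = dim_row M \<and> sorted_wrt (\<ge>) xs \<and> char_poly M = (\<Prod>a\<leftarrow>xs. [:- of_real a, 1:])"
    using assms by (simp add: lp_def)
  fix ys assume "length ys = dim_row M \<and> sorted_wrt (\<ge>) ys \<and> char_poly M = (\<Prod>a\<leftarrow>ys. [:- of_real a, 1:])"
  then have "sorted_wrt (\<ge>) ys" "lp ys = (lp xs :: 'a poly)" using assms by (auto simp: lp_def)
  then show "ys = xs" using sorted_desc_unique assms(2) lp_inj by metis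
qed

lemma sorted_exists:
  fixes xs :: "real list"
  shows "\<exists>ys. mset ys = mset xs \<and> sorted_wrt (\<ge>) ys"
proof (intro exI conjI)
  show "mset (rev (sort xs)) = mset xs" by simp
  show "sorted_wrt (\<ge>) (rev (sort xs))" 
    using sorted_sort[of xs] by (simp add: sorted_wrt_rev )
qed



lemma adj_dims[simp]: "dim_row (adj A) = dim_col A" "dim_col (adj A) = dim_row A"
  unfolding adj_def by auto

lemma adj_carrier[simp]: "A \<in> carrier_mat k n \<Longrightarrow> adj A \<in> carrier_mat n k"
  unfolding adj_def by auto

lemma index_adj[simp]: "i < dim_col A \<Longrightarrow> j < dim_row A \<Longrightarrow> adj A $$ (i,j) = conjugate (A $$ (j,i))"
  unfolding adj_def by auto

lemma mult_adj_index:
  assumes "i < dim_row A" "j < dim_row A"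
  shows "(A * adj A) $$ (i,j) = (\<Sum>l<dim_col A. A $$ (i,l) * conjugate (A $$ (j,l)))"
  using assms by (auto simp: scalar_prod_def lessThan_atLeast0 intro!: sum.cong)

lemma adj_mult_index:
  assumes "i < dim_col A" "j < dim_col A"
  shows "(adj A * A) $$ (i,j) = (\<Sum>l<dim_row A. conjugate (A $$ (l,i)) * A $$ (l,j))"
  using assms by (auto simp: scalar_prod_def lessThan_atLeast0 intro!: sum.cong)

lemma eig_real_nonneg:
  fixes H :: "complex mat"
  assumes H: "H \<in> carrier_mat k n" and ev: "eigenvalue (H * adj H) c"
  shows "\<exists>r. c = of_real r \<and> r \<ge> 0"
proof -
  let ?M = "H * adj H"
  from ev obtain v where v: "v \<in> carrier_vec k" "v \<noteq> 0\<^sub>v k" "?M *\<^sub>v v = c \<cdot>\<^sub>v v"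
    unfolding eigenvalue_def eigenvector_def using H by auto
  define w where "w l = (\<Sum>j<k. cnj (H $$ (j,l)) * v $ j)" for l
  have Mv: "(\<Sum>j<k. (\<Sum>l<n. H $$ (i,l) * cnj (H $$ (j,l))) * v $ j) = c * v $ i" if i: "i < k" for i
  proof -
    have "(?M *\<^sub>v v) $ i = c * v $ i" using v i by simp
    moreover have "(?M *\<^sub>v v) $ i = (\<Sum>j<k. ?M $$ (i,j) * v $ j)"
      using i v(1) H by (auto simp: scalar_prod_def lessThan_atLeast0 intro!: sum.cong)
    moreover have "?M $$ (i,j) = (\<Sum>l<n. H $$ (i,l) * cnj (H $$ (j,l)))" if "j < k" for j
      using mult_adj_index[of i H j] i that H by auto
    ultimately show ?thesis by simp
  qed
  have "(\<Sum>i<k. cnj (v $ i) * (c * v $ i)) = (\<Sum>i<k. cnj (v $ i) * (\<Sum>j<k. (\<Sum>l<n. H $$ (i,l) * cnj (H $$ (j,l))) * v $ j))"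
    using Mv by simp
  also have "\<dots> = (\<Sum>i<k. \<Sum>j<k. \<Sum>l<n. cnj (v $ i) * H $$ (i,l) * cnj (H $$ (j,l)) * v $ j)"
    by (simp add: sum_distrib_left sum_distrib_right mult.assoc)
  also have "\<dots> = (\<Sum>l<n. \<Sum>i<k. \<Sum>j<k. cnj (v $ i) * H $$ (i,l) * cnj (H $$ (j,l)) * v $ j)"
    by (subst sum.swap, subst (2) sum.swap, simp)
  also have "\<dots> = (\<Sum>l<n. cnj (w l) * w l)"
    unfolding w_def by (simp add: sum_product mult.assoc mult.left_commute)
  finally have eq: "c * (\<Sum>i<k. cnj (v $ i) * v $ i) = (\<Sum>l<n. cnj (w l) * w l)"
    by (simp add: sum_distrib_left mult.left_commute)
  define S where "S = (\<Sum>i<k. (norm (v $ i))^2)"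
  define T where "T = (\<Sum>l<n. (norm (w l))^2)"
  have sS: "(\<Sum>i<k. cnj (v $ i) * v $ i) = of_real S"
    unfolding S_def by (simp only: of_real_sum complex_norm_square, simp add: mult.commute)
  have tT: "(\<Sum>l<n. cnj (w l) * w l) = of_real T"
    unfolding T_def by (simp only: of_real_sum complex_norm_square, simp add: mult.commute)
  have T0: "T \<ge> 0" unfolding T_def by (simp add: sum_nonneg)
  obtain i where i: "i < k" "v $ i \<noteq> 0" using v by (metis dim_vec eq_vecI index_zero_vec(1) carrier_vecD index_zero_vec(2))
  have "S \<ge> (norm (v $ i))^2" unfolding S_def
    by (rule member_le_sum) (use i in auto)
  moreover have "(norm (v $ i))^2 > 0" using i by simp
  ultimately have S0: "S > 0" by linarith
  from eq sS tT have "c * of_real S = of_real T" by simp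
  then have "c = of_real (T / S)" using S0 by (simp add: field_simps)
  then show ?thesis using T0 S0 by (intro exI[of _ "T / S"]) auto
qed



lemma split_complex:
  fixes H :: "complex mat"
  assumes H: "H \<in> carrier_mat k n"
  shows "\<exists>as. length as = k \<and> (\<forall>a\<in>set as. 0 \<le> a) \<and> char_poly (H * adj H) = lp as"
proof -
  have M: "H * adj H \<in> carrier_mat k k" using H by auto
  from char_poly_factorized[OF M] obtain cs where
    cs: "char_poly (H * adj H) = (\<Prod>a\<leftarrow>cs. [:- a, 1:])" "length cs = k" by blast
  have re: "\<exists>r. c = of_real r \<and> r \<ge> 0" if c: "c \<in> set cs" for c
  proof -
    have "poly (char_poly (H * adj H)) c = 0" unfolding cs(1) poly_prod_list prod_list_zero_iff
      using c by (auto simp: image_iff)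
    then have "eigenvalue (H * adj H) c" using eigenvalue_root_char_poly[OF M] by simp
    then show ?thesis using eig_real_nonneg[OF H] by blast
  qed
  have re2: "c = of_real (Re c) \<and> Re c \<ge> 0" if "c \<in> set cs" for c
    using re[OF that] by auto
  show ?thesis
  proof (intro exI conjI)
    show "length (map Re cs) = k" using cs by simp
    show "\<forall>a\<in>set (map Re cs). 0 \<le> a" using re2 by auto
    have "lp (map Re cs) = (\<Prod>a\<leftarrow>cs. [:- of_real (Re a), 1:])" unfolding lp_def by (simp add: o_def)
    also have "\<dots> = (\<Prod>a\<leftarrow>cs. [:- a, 1:])"
      by (rule arg_cong[where f = prod_list], rule map_cong, auto dest: re2)
    finally show "char_poly (H * adj H) = lp (map Re cs)" using cs by simp
  qed
qed

lemma split_real: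
  fixes H :: "real mat"
  assumes H: "H \<in> carrier_mat k n"
  shows "\<exists>as. length as = k \<and> (\<forall>a\<in>set as. 0 \<le> a) \<and> char_poly (H * adj H) = lp as"
proof -
  let ?Hc = "map_mat complex_of_real H"
  have Hc: "?Hc \<in> carrier_mat k n" using H by auto
  have adjc: "adj ?Hc = map_mat complex_of_real (adj H)"
    using H by (intro eq_matI) auto
  have M: "H * adj H \<in> carrier_mat k k" using H by auto
  have "?Hc * adj ?Hc = map_mat complex_of_real (H * adj H)"
    unfolding adjc using of_real_hom.mat_hom_mult[OF H adj_carrier[OF H]] by (rule sym)
  then have cpc: "char_poly (?Hc * adj ?Hc) = map_poly complex_of_real (char_poly (H * adj H))"
    using of_real_hom.char_poly_hom[OF M] by simp
  from split_complex[OF Hc] obtain as where as: "length as = k" "\<forall>a\<in>set as. 0 \<le> a"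
    "char_poly (?Hc * adj ?Hc) = lp as" by blast
  interpret mp: map_poly_inj_comm_ring_hom "complex_of_real" ..
  have "map_poly complex_of_real (lp as) = lp as"
    unfolding lp_def mp.hom_prod_list by (simp add: o_def)
  then have "char_poly (H * adj H) = lp as"
    using cpc as(3) mp.eq_iff by metis
  with as show ?thesis by blast
qed



lemma spec_lemma:
  fixes H :: "'a::{conjugatable_field, real_algebra_1} mat"
  assumes HS: "\<exists>as. length as = k \<and> (\<forall>a\<in>set as. 0 \<le> a) \<and> char_poly (H * adj H) = lp as"
  shows "length (eigenvalues_desc (H * adj H)) = k \<and> sorted_wrt (\<ge>) (eigenvalues_desc (H * adj H)) \<and>
    (\<forall>a\<in>set (eigenvalues_desc (H * adj H)). 0 \<le> a) \<and> char_poly (H * adj H) = lp (eigenvalues_desc (H * adj H))"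
proof -
  from HS obtain as where as: "length as = k" "\<forall>a\<in>set as. 0 \<le> a" "char_poly (H * adj H) = lp as" by blast
  from sorted_exists[of as] obtain ys where ys: "mset ys = mset as" "sorted_wrt (\<ge>) ys" by blast
  have len: "length ys = k" using as(1) ys(1) by (metis size_mset)
  have cp: "char_poly (H * adj H) = lp ys" using as(3) lp_mset[OF ys(1)] by metis
  have "dim_row (H * adj H) = k"
  proof -
    have "degree (char_poly (H * adj H)) = k" unfolding cp lp_def
      using degree_linear_factors[of "\<lambda>a. - of_real a" ys] len by simp
    moreover have "degree (char_poly (H * adj H)) = dim_row (H * adj H)"
      by (rule degree_monic_char_poly[THEN conjunct1], auto)
    ultimately show ?thesis by simp
  qed
  then have "eigenvalues_desc (H * adj H) = ys" using eigenvalues_desc_eq[of ys "H * adj H"] len ys cp by simp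
  moreover have "\<forall>a\<in>set ys. 0 \<le> a" using as(2) ys(1) by (metis set_mset_mset)
  ultimately show ?thesis using len ys cp by simp
qed

lemma det_shift:
  fixes M :: "'a::field mat"
  assumes M: "M \<in> carrier_mat k k"
  shows "det (x \<cdot>\<^sub>m 1\<^sub>m k - (c \<cdot>\<^sub>m 1\<^sub>m k - M)) = (-1)^k * det ((c - x) \<cdot>\<^sub>m 1\<^sub>m k - M)"
proof -
  have "x \<cdot>\<^sub>m 1\<^sub>m k - (c \<cdot>\<^sub>m 1\<^sub>m k - M) = (-1) \<cdot>\<^sub>m ((c - x) \<cdot>\<^sub>m 1\<^sub>m k - M)"
    using M by (intro eq_matI) (auto simp: algebra_simps)
  then show ?thesis using M by simp
qed

lemma sum_rev_reindex:
  fixes g :: "nat \<Rightarrow> 'a::comm_monoid_add"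
  assumes "n \<le> N"
  shows "(\<Sum>j<n. g (N - 1 - j)) = (\<Sum>l\<in>{N-n..<N}. g l)"
  using assms
proof (induction n)
  case 0 then show ?case by simp
next
  case (Suc n)
  have "{N - Suc n..<N} = insert (N - 1 - n) {N - n..<N}" using Suc.prems by auto
  moreover have "N - 1 - n \<notin> {N - n..<N}" using Suc.prems by auto
  ultimately show ?case using Suc by (simp add: add.commute)
qed

lemma sum_split_at:
  fixes g :: "nat \<Rightarrow> 'a::comm_monoid_add"
  assumes "m \<le> N"
  shows "(\<Sum>l<N. g l) = (\<Sum>l<m. g l) + (\<Sum>l\<in>{m..<N}. g l)"
  using assms by (metis atLeast0LessThan le0 sum.atLeastLessThan_concat)

lemma prod_list_neg: "(\<Prod>a\<leftarrow>xs. - f a) = (-1) ^ length xs * (\<Prod>a\<leftarrow>xs. f a :: 'a::comm_ring_1)"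
  by (induction xs) auto

lemma poly_lp_append: "poly (lp (xs @ ys) :: 'a::{comm_ring_1,real_algebra_1} poly) x = poly (lp xs) x * poly (lp ys) x"
  by (simp add: poly_lp)

lemma poly_lp_replicate: "poly (lp (replicate k a) :: 'a::{comm_ring_1,real_algebra_1} poly) x = (x - of_real a) ^ k"
  by (simp add: poly_lp prod_list_replicate)

lemma first_cols_carrier[simp]: "first_cols H n \<in> carrier_mat (dim_row H) n"
  unfolding first_cols_def by auto

lemma first_cols_index[simp]: "i < dim_row H \<Longrightarrow> j < n \<Longrightarrow> first_cols H n $$ (i,j) = H $$ (i,j)"
  unfolding first_cols_def by auto

lemma rev_cols_dims[simp]: "dim_row (rev_cols H) = dim_row H" "dim_col (rev_cols H) = dim_col H"
  unfolding rev_cols_def by auto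

lemma rev_cols_index[simp]: "i < dim_row H \<Longrightarrow> j < dim_col H \<Longrightarrow> rev_cols H $$ (i,j) = H $$ (i, dim_col H - 1 - j)"
  unfolding rev_cols_def by auto




lemma first_cols_dims[simp]: "dim_row (first_cols H n) = dim_row H" "dim_col (first_cols H n) = n"
  unfolding first_cols_def by auto

lemma FF_identity:
  fixes F :: "'a::{conjugatable_field, real_algebra_1, field_char_0} mat"
  assumes d1: "1 \<le> d" and F: "F \<in> carrier_mat d N" and tight: "tight F"
    and cn: "\<forall>j<N. colnorm2 F j = of_nat d"
  shows "F * adj F = of_nat N \<cdot>\<^sub>m 1\<^sub>m d"
proof -
  from tight F obtain c where c: "F * adj F = c \<cdot>\<^sub>m 1\<^sub>m d" unfolding tight_def by auto
  have "(\<Sum>a<d. (F * adj F) $$ (a,a)) = (\<Sum>a<d. c)" unfolding c by simp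
  also have "\<dots> = c * of_nat d" by simp
  finally have t1: "(\<Sum>a<d. (F * adj F) $$ (a,a)) = c * of_nat d" .
  have "(\<Sum>a<d. (F * adj F) $$ (a,a)) = (\<Sum>a<d. \<Sum>l<N. F $$ (a,l) * conjugate (F $$ (a,l)))"
    using F by (intro sum.cong refl, subst mult_adj_index) auto
  also have "\<dots> = (\<Sum>l<N. \<Sum>a<d. F $$ (a,l) * conjugate (F $$ (a,l)))" by (rule sum.swap)
  also have "\<dots> = (\<Sum>l<N. colnorm2 F l)" unfolding colnorm2_def using F by simp
  also have "\<dots> = (\<Sum>l<N. of_nat d)" using cn by simp
  also have "\<dots> = of_nat N * of_nat d" by simp
  finally have "c * of_nat d = of_nat N * (of_nat d :: 'a)" using t1 by simp
  moreover have "(of_nat d :: 'a) \<noteq> 0" using d1 by simp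
  ultimately have "c = of_nat N" by simp
  then show ?thesis using c by simp
qed

lemma QQ_identity:
  fixes F :: "'a::conjugatable_field mat"
  assumes F: "F \<in> carrier_mat d N" and FF: "F * adj F = of_nat N \<cdot>\<^sub>m 1\<^sub>m d" and n: "n \<le> N"
  shows "mat d n (\<lambda>(a,j). F $$ (a, N-1-j)) * adj (mat d n (\<lambda>(a,j). F $$ (a, N-1-j)))
     = of_nat N \<cdot>\<^sub>m 1\<^sub>m d - first_cols F (N-n) * adj (first_cols F (N-n))"
    (is "?Q * adj ?Q = _ - ?Fm * adj ?Fm")
proof (rule eq_matI)
  fix a b assume a: "a < dim_row (of_nat N \<cdot>\<^sub>m 1\<^sub>m d - ?Fm * adj ?Fm)" and
    b: "b < dim_col (of_nat N \<cdot>\<^sub>m 1\<^sub>m d - ?Fm * adj ?Fm)"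
  then have a: "a < d" and b: "b < d" using F by auto
  define g where "g l = F $$ (a,l) * conjugate (F $$ (b,l))" for l
  have "(?Q * adj ?Q) $$ (a,b) = (\<Sum>j<n. g (N-1-j))"
    using a b n by (subst mult_adj_index) (auto simp: g_def)
  also have "\<dots> = (\<Sum>l\<in>{N-n..<N}. g l)" by (rule sum_rev_reindex[OF n])
  finally have 1: "(?Q * adj ?Q) $$ (a,b) = (\<Sum>l\<in>{N-n..<N}. g l)" .
  have 2: "(?Fm * adj ?Fm) $$ (a,b) = (\<Sum>l<N-n. g l)"
    using a b n F by (subst mult_adj_index) (auto simp: g_def)
  have "(F * adj F) $$ (a,b) = (\<Sum>l<N. g l)"
    using a b n F by (subst mult_adj_index) (auto simp: g_def)
  also have "\<dots> = (\<Sum>l<N-n. g l) + (\<Sum>l\<in>{N-n..<N}. g l)" by (rule sum_split_at) simp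
  finally have 3: "(of_nat N \<cdot>\<^sub>m 1\<^sub>m d) $$ (a,b) = (\<Sum>l<N-n. g l) + (\<Sum>l\<in>{N-n..<N}. g l)"
    unfolding FF .
  show "(?Q * adj ?Q) $$ (a,b) = (of_nat N \<cdot>\<^sub>m 1\<^sub>m d - ?Fm * adj ?Fm) $$ (a,b)"
    using 1 2 3 a b F by (simp add: algebra_simps)
next
  show "dim_row (?Q * adj ?Q) = dim_row (of_nat N \<cdot>\<^sub>m 1\<^sub>m d - ?Fm * adj ?Fm)" using F by simp
  show "dim_col (?Q * adj ?Q) = dim_col (of_nat N \<cdot>\<^sub>m 1\<^sub>m d - ?Fm * adj ?Fm)" using F by simp
qed

lemma PP_identity:
  fixes F G :: "'a::conjugatable_field mat"
  assumes F: "F \<in> carrier_mat d N" and G: "G \<in> carrier_mat (N-d) N"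
    and NC: "adj F * F + adj G * G = of_nat N \<cdot>\<^sub>m 1\<^sub>m N" and n: "n \<le> N"
  shows "adj (first_cols (rev_cols G) n) * first_cols (rev_cols G) n
     = of_nat N \<cdot>\<^sub>m 1\<^sub>m n - adj (mat d n (\<lambda>(a,j). F $$ (a, N-1-j))) * mat d n (\<lambda>(a,j). F $$ (a, N-1-j))"
    (is "adj ?P * ?P = _ - adj ?Q * ?Q")
proof (rule eq_matI)
  fix i j assume i: "i < dim_row (of_nat N \<cdot>\<^sub>m 1\<^sub>m n - adj ?Q * ?Q)" and
    j: "j < dim_col (of_nat N \<cdot>\<^sub>m 1\<^sub>m n - adj ?Q * ?Q)"
  then have i: "i < n" and j: "j < n" by auto
  have iN: "N-1-i < N" "N-1-j < N" using i j n by auto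
  have "(adj ?P * ?P) $$ (i,j) = (\<Sum>l<N-d. conjugate (G $$ (l, N-1-i)) * G $$ (l, N-1-j))"
    using i j n G by (subst adj_mult_index) (auto intro!: sum.cong)
  also have "\<dots> = (adj G * G) $$ (N-1-i, N-1-j)"
    using iN G by (subst adj_mult_index) auto
  finally have 1: "(adj ?P * ?P) $$ (i,j) = (adj G * G) $$ (N-1-i, N-1-j)" .
  have "(adj ?Q * ?Q) $$ (i,j) = (\<Sum>l<d. conjugate (F $$ (l, N-1-i)) * F $$ (l, N-1-j))"
    using i j n F by (subst adj_mult_index) auto
  also have "\<dots> = (adj F * F) $$ (N-1-i, N-1-j)"
    using iN F by (subst adj_mult_index) auto
  finally have 2: "(adj ?Q * ?Q) $$ (i,j) = (adj F * F) $$ (N-1-i, N-1-j)" .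
  have "(adj F * F + adj G * G) $$ (N-1-i, N-1-j) = (of_nat N \<cdot>\<^sub>m 1\<^sub>m N) $$ (N-1-i, N-1-j)"
    unfolding NC ..
  then have 3: "(adj F * F) $$ (N-1-i, N-1-j) + (adj G * G) $$ (N-1-i, N-1-j) = (if i = j then of_nat N else 0)"
    using iN F G i j n by auto
  show "(adj ?P * ?P) $$ (i,j) = (of_nat N \<cdot>\<^sub>m 1\<^sub>m n - adj ?Q * ?Q) $$ (i,j)"
    using 1 2 3 i j by (auto simp: algebra_simps)
next
  show "dim_row (adj ?P * ?P) = dim_row (of_nat N \<cdot>\<^sub>m 1\<^sub>m n - adj ?Q * ?Q)" by simp
  show "dim_col (adj ?P * ?P) = dim_col (of_nat N \<cdot>\<^sub>m 1\<^sub>m n - adj ?Q * ?Q)" by simp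
qed

lemma sorted_wrt_replicate_ge: "sorted_wrt (\<ge>) (replicate k (c::real))"
  by (induction k) auto

lemma main_generic:
  fixes F G :: "'a::{conjugatable_field, real_algebra_1, field_char_0} mat"
  assumes HS: "\<And>(H::'a mat) k n. H \<in> carrier_mat k n \<Longrightarrow> \<exists>as. length as = k \<and> (\<forall>a\<in>set as. 0 \<le> a) \<and> char_poly (H * adj H) = lp as"
  and d1: "1 \<le> d" and F: "F \<in> carrier_mat d N" and tight: "tight F" and cn: "\<forall>j<N. colnorm2 F j = of_nat d"
  and G: "G \<in> carrier_mat (N-d) N" and NC: "adj F * F + adj G * G = of_nat N \<cdot>\<^sub>m 1\<^sub>m N"
  and r: "r < N - d" and n: "n \<le> N"
  shows "Psi N d (lambda_mat F) r n = lambda_mat (rev_cols G) r n"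
proof -
  have dN: "d \<le> N" using r by simp
  define Q where "Q = mat d n (\<lambda>(a,j). F $$ (a, N-1-j))"
  define Fm where "Fm = first_cols F (N-n)"
  define P where "P = first_cols (rev_cols G) n"
  have Qc: "Q \<in> carrier_mat d n" unfolding Q_def by simp
  have Fmc: "Fm \<in> carrier_mat d (N-n)" unfolding Fm_def using F by auto
  have Pc: "P \<in> carrier_mat (N-d) n" using G unfolding P_def by auto
  have FF: "F * adj F = of_nat N \<cdot>\<^sub>m 1\<^sub>m d" by (rule FF_identity[OF d1 F tight cn])
  have I1: "Q * adj Q = of_nat N \<cdot>\<^sub>m 1\<^sub>m d - Fm * adj Fm" unfolding Q_def Fm_def by (rule QQ_identity[OF F FF n])
  have I2: "adj P * P = of_nat N \<cdot>\<^sub>m 1\<^sub>m n - adj Q * Q" unfolding P_def Q_def by (rule PP_identity[OF F G NC n])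
  have FmM: "Fm * adj Fm \<in> carrier_mat d d" using Fmc by auto
  have QM: "Q * adj Q \<in> carrier_mat d d" using Qc by auto
  have QM': "adj Q * Q \<in> carrier_mat n n" using Qc by auto
  have PM: "P * adj P \<in> carrier_mat (N-d) (N-d)" using Pc by auto
  define \<mu> where "\<mu> = eigenvalues_desc (Fm * adj Fm)"
  define \<nu> where "\<nu> = eigenvalues_desc (P * adj P)"
  from spec_lemma[OF HS[OF Fmc]] have \<mu>: "length \<mu> = d" "sorted_wrt (\<ge>) \<mu>" "\<forall>a\<in>set \<mu>. 0 \<le> a"
     "char_poly (Fm * adj Fm) = lp \<mu>" unfolding \<mu>_def by auto
  from spec_lemma[OF HS[OF Pc]] have \<nu>: "length \<nu> = N-d" "sorted_wrt (\<ge>) \<nu>" "\<forall>a\<in>set \<nu>. 0 \<le> a"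
     "char_poly (P * adj P) = lp \<nu>" unfolding \<nu>_def by auto
  from HS[OF Qc] obtain \<kappa> where \<kappa>: "length \<kappa> = d" "\<forall>a\<in>set \<kappa>. 0 \<le> a" "char_poly (Q * adj Q) = lp \<kappa>"
    by blast
  have k1: "det (y \<cdot>\<^sub>m 1\<^sub>m d - Q * adj Q) = (\<Prod>a\<leftarrow>\<mu>. y - (of_nat N - of_real a))" for y
  proof -
    have "det (y \<cdot>\<^sub>m 1\<^sub>m d - Q * adj Q) = (-1)^d * det ((of_nat N - y) \<cdot>\<^sub>m 1\<^sub>m d - Fm * adj Fm)"
      unfolding I1 by (rule det_shift[OF FmM])
    also have "\<dots> = (-1)^d * (\<Prod>a\<leftarrow>\<mu>. (of_nat N - y) - of_real a)"
      using char_poly_eval[OF FmM, of "of_nat N - y"] \<mu>(4) poly_lp by metis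
    also have "\<dots> = (\<Prod>a\<leftarrow>\<mu>. y - (of_nat N - of_real a))"
      using prod_list_neg[of "\<lambda>a. y - (of_nat N - of_real a)" \<mu>] \<mu>(1) by (simp add: algebra_simps)
    finally show ?thesis .
  qed
  have "poly (lp \<kappa>) = poly (lp (map (\<lambda>a. real N - a) \<mu>) :: 'a poly)"
  proof
    fix y :: 'a
    have "poly (lp \<kappa>) y = det (y \<cdot>\<^sub>m 1\<^sub>m d - Q * adj Q)" using \<kappa>(3) char_poly_eval[OF QM, of y] by simp
    also have "\<dots> = (\<Prod>a\<leftarrow>\<mu>. y - (of_nat N - of_real a))" by (rule k1)
    also have "\<dots> = poly (lp (map (\<lambda>a. real N - a) \<mu>)) y" by (simp add: poly_lp o_def of_real_diff)
    finally show "poly (lp \<kappa>) y = poly (lp (map (\<lambda>a. real N - a) \<mu>)) y" .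
  qed
  then have "lp \<kappa> = (lp (map (\<lambda>a. real N - a) \<mu>) :: 'a poly)" by (simp add: poly_eq_poly_eq_iff)
  then have "mset \<kappa> = mset (map (\<lambda>a. real N - a) \<mu>)" by (rule lp_inj)
  then have setk: "set \<kappa> = (\<lambda>a. real N - a) ` set \<mu>" by (metis mset_eq_setD set_map)
  have \<mu>N: "\<forall>a\<in>set \<mu>. a \<le> real N"
  proof
    fix a assume "a \<in> set \<mu>"
    then have "real N - a \<in> set \<kappa>" using setk by auto
    then show "a \<le> real N" using \<kappa>(2) by force
  qed
  define X1 where "X1 = replicate d (real N) @ \<nu> @ replicate (n+d) 0"
  define X2 where "X2 = replicate n (real N) @ \<mu> @ replicate N 0"
  have E2: "poly (lp X1 :: 'a poly) x = poly (lp X2) x" for x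
  proof -
    define y where "y = of_nat N - x"
    define Cn where "Cn = det (x \<cdot>\<^sub>m 1\<^sub>m (N-d) - P * adj P)"
    define A where "A = det (x \<cdot>\<^sub>m 1\<^sub>m n - adj P * P)"
    define D where "D = det (y \<cdot>\<^sub>m 1\<^sub>m n - adj Q * Q)"
    define Cq where "Cq = det (y \<cdot>\<^sub>m 1\<^sub>m d - Q * adj Q)"
    define Pm where "Pm = (\<Prod>a\<leftarrow>\<mu>. x - of_real a)"
    have f1: "x^n * Cn = x^(N-d) * A" unfolding Cn_def A_def
      by (rule det_sylvester) (use Pc in auto)
    have f2: "A = (-1)^n * D" unfolding A_def D_def I2 y_def by (rule det_shift[OF QM'])
    have f3: "y^n * Cq = y^d * D" unfolding Cq_def D_def
      by (rule det_sylvester) (use Qc in auto)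
    have f4: "Cq = (-1)^d * Pm"
    proof -
      have "Cq = (\<Prod>a\<leftarrow>\<mu>. - (x - of_real a))" unfolding Cq_def k1 y_def by (simp add: algebra_simps)
      then show ?thesis unfolding Pm_def using prod_list_neg[of "\<lambda>a. x - of_real a" \<mu>] \<mu>(1) by simp
    qed
    have cnv: "Cn = (\<Prod>a\<leftarrow>\<nu>. x - of_real a)"
      unfolding Cn_def using char_poly_eval[OF PM, of x] \<nu>(4) poly_lp by metis
    have s1: "(x - of_nat N)^k = (-1)^k * y^k" for k
      unfolding y_def power_mult_distrib[symmetric] by (simp add: algebra_simps)
    have s3: "x^d * x^(N-d) = x^N" using dN by (simp add: power_add[symmetric])
    have m1: "(-1::'a)^d * (-1)^d = 1" by (simp add: power_mult_distrib[symmetric])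
    have "poly (lp X1 :: 'a poly) x = (x - of_nat N)^d * Cn * x^(n+d)"
      unfolding X1_def cnv by (simp add: poly_lp_append poly_lp_replicate poly_lp)
    also have "\<dots> = (-1)^d * y^d * x^d * (x^n * Cn)" unfolding s1 power_add by (simp add: mult_ac)
    also have "\<dots> = (-1)^d * (-1)^n * (x^d * x^(N-d)) * (y^d * D)" unfolding f1 f2 by (simp add: mult_ac)
    also have "\<dots> = (-1)^d * (-1)^n * x^N * (y^n * Cq)" unfolding s3 f3 ..
    also have "\<dots> = ((-1)^d * (-1)^d) * ((-1)^n * y^n) * Pm * x^N" unfolding f4 by (simp add: mult_ac)
    also have "\<dots> = (x - of_nat N)^n * Pm * x^N" unfolding m1 s1 by simp
    also have "\<dots> = poly (lp X2) x"
      unfolding X2_def Pm_def by (simp add: poly_lp_append poly_lp_replicate poly_lp)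
    finally show ?thesis .
  qed
  have "poly (lp X1 :: 'a poly) = poly (lp X2)" using E2 by (intro ext)
  then have "lp X1 = (lp X2 :: 'a poly)" by (simp add: poly_eq_poly_eq_iff)
  then have mX: "mset X1 = mset X2" by (rule lp_inj)
  have \<nu>N: "\<forall>a\<in>set \<nu>. a \<le> real N"
  proof
    fix a assume "a \<in> set \<nu>"
    then have "a \<in> set X2" using mset_eq_setD[OF mX] unfolding X1_def by auto
    then show "a \<le> real N" using \<mu>N unfolding X2_def by (auto split: if_splits)
  qed
  have sX1: "sorted_wrt (\<ge>) X1" unfolding X1_def using \<nu> \<nu>N
    by (auto simp: sorted_wrt_append sorted_wrt_replicate_ge)
  have sX2: "sorted_wrt (\<ge>) X2" unfolding X2_def using \<mu> \<mu>N
    by (auto simp: sorted_wrt_append sorted_wrt_replicate_ge)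
  have X12: "X1 = X2" by (rule sorted_desc_unique[OF sX1 sX2 mX])
  have "lambda_mat (rev_cols G) r n = \<nu> ! r" unfolding lambda_mat_def \<nu>_def P_def ..
  also have "\<dots> = X1 ! (d + r)" unfolding X1_def using r \<nu>(1) by (simp add: nth_append)
  also have "\<dots> = X2 ! (d + r)" unfolding X12 ..
  also have "\<dots> = Psi N d (lambda_mat F) r n"
    unfolding X2_def Psi_def lambda_mat_def Fm_def[symmetric] \<mu>_def[symmetric] using r \<mu>(1) dN
    by (auto simp: nth_append)
  finally show ?thesis by simp
qed


theorem proposition5p3:
  shows
  "(\<forall>(N::nat) (d::nat) (F::real mat) (G::real mat).
      1 \<le> d \<and> d \<le> N - 1 \<and>
      F \<in> carrier_mat d N \<and> spanning F \<and> tight F \<and> (\<forall>j<N. colnorm2 F j = of_nat d) \<and>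
      G \<in> carrier_mat (N - d) N \<and> spanning G \<and>
      adj F * F + adj G * G = of_nat N \<cdot>\<^sub>m 1\<^sub>m N
      \<longrightarrow> (\<forall>r < N - d. \<forall>n \<le> N. Psi N d (lambda_mat F) r n = lambda_mat (rev_cols G) r n))
 \<and> (\<forall>(N::nat) (d::nat) (F::complex mat) (G::complex mat).
      1 \<le> d \<and> d \<le> N - 1 \<and>
      F \<in> carrier_mat d N \<and> spanning F \<and> tight F \<and> (\<forall>j<N. colnorm2 F j = of_nat d) \<and>
      G \<in> carrier_mat (N - d) N \<and> spanning G \<and>
      adj F * F + adj G * G = of_nat N \<cdot>\<^sub>m 1\<^sub>m N
      \<longrightarrow> (\<forall>r < N - d. \<forall>n \<le> N. Psi N d (lambda_mat F) r n = lambda_mat (rev_cols G) r n))"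
  apply (intro conjI allI impI)
  subgoal by (rule main_generic[OF split_real]) auto
  subgoal by (rule main_generic[OF split_complex]) auto
  done

end
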